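(* In the setting of the adaptive implicit-explicit iteration described in the context, let $a>0$ and $\eta_{\min}>0$, and suppose the step size satisfies $0<\eta_{\min}\le\eta\le\frac1{\|\bm T\|+2a}$. Then there exists $b>0$ such that for every $k\ge0$, $\left\|\begin{pmatrix}\nabla_{\bm d}L(\bm d_{k+1},\beta_{k+1})\\ \nabla_\beta L(\bm d_{k+1},\beta_{k+1})\end{pmatrix}\right\|_2\le b\,\|\bm d_{k+1}-\bm d_k\|_2.$
   Context: Let $n\ge1$, $r>0$, $\bm g\in\mathbb R^n$ with $\bm g\neq0$, and $\bm H=\bm D+\bm T\in\mathbb R^{n\times n}$, where $\bm D$ is diagonal with nonnegative diagonal entries $D_{i,i}$ and $\bm T$ is symmetric; $\|\bm T\|$ is the spectral norm. Let $f(\bm d)=\bm g^\top\bm d+\frac12\bm d^\top\bm H\bm d$ and $L(\bm d,\beta)=f(\bm d)+\frac{\beta^2}{2}(\|\bm d\|_2^2-r^2)$ for $\bm d\in\mathbb R^n$, $\beta\in\mathbb R$. Adaptive implicit-explicit iteration with step size $\eta>0$: set $\bm d_0=-r\bm g/\|\bm g\|_2$. For $k=0,1,2,\dots$: let $\bm b_k=\bm d_k-\eta(\bm g+\bm T\bm d_k)$ and $\phi_k(\lambda)=\sum_{i=1}^n\big([\bm b_k]_i/(1+\eta(D_{i,i}+\lambda))\big)^2$; set $\lambda_{k+1}=0$ if $\phi_k(0)\le r^2$, and otherwise let $\lambda_{k+1}>0$ be the solution of $\phi_k(\lambda)=r^2$; then $\bm d_{k+1}=(\bm I+\eta(\bm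 D+\lambda_{k+1}\bm I))^{-1}\bm b_k$. Finally $\beta_k=\sqrt{\lambda_k}$. *)

theory Defs
  imports "HOL-Analysis.Analysis"
begin

text \<open>Objective f(d) = g.d + 1/2 d.(H d) and Lagrangian
  L(d,beta) = f(d) + beta^2/2 (norm d ^2 - r^2).\<close>

definition fobj :: "real^'n \<Rightarrow> real^'n^'n \<Rightarrow> real^'n \<Rightarrow> real" where
  "fobj g H d = g \<bullet> d + (1/2) * (d \<bullet> (H *v d))"

definition Lag :: "real^'n \<Rightarrow> real^'n^'n \<Rightarrow> real \<Rightarrow> real^'n \<Rightarrow> real \<Rightarrow> real" where
  "Lag g H r d \<beta> = fobj g H d + (\<beta>^2 / 2) * ((norm d)^2 - r^2)"

text \<open>Gradient of L with respect to d (for symmetric H) and with respect to beta.\<close>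

definition gradL_d :: "real^'n \<Rightarrow> real^'n^'n \<Rightarrow> real \<Rightarrow> real^'n \<Rightarrow> real \<Rightarrow> real^'n" where
  "gradL_d g H r d \<beta> = g + H *v d + (\<beta>^2) *\<^sub>R d"

definition gradL_beta :: "real^'n \<Rightarrow> real^'n^'n \<Rightarrow> real \<Rightarrow> real^'n \<Rightarrow> real \<Rightarrow> real" where
  "gradL_beta g H r d \<beta> = \<beta> * ((norm d)^2 - r^2)"

lemma symdot: fixes H :: "real^'n^'n" assumes "transpose H = H"
  shows "d \<bullet> (H *v h) = (H *v d) \<bullet> h"
  by (metis assms dot_lmul_matrix inner_commute transpose_transpose vector_transpose_matrix)
lemma Lag_derivative_aux:
  fixes H :: "real^'n^'n" and g :: "real^'n"
  assumes "transpose H = H"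
  shows "((\<lambda>(d, \<beta>). g \<bullet> d + (1/2) * (d \<bullet> (H *v d)) + (\<beta>^2 / 2) * ((norm d)^2 - r^2)) has_derivative
     (\<lambda>(h, t). (g + H *v d + (\<beta>^2) *\<^sub>R d) \<bullet> h + (\<beta> * ((norm d)^2 - r^2)) * t)) (at (d, \<beta>))"
proof -
  have bl: "bounded_linear (\<lambda>p::(real^'n)\<times>real. H *v fst p)"
    using bounded_linear_compose[OF matrix_vector_mul_bounded_linear[of H] bounded_linear_fst] by (simp add: o_def)
  have hm[derivative_intros]: "((\<lambda>p. H *v fst p) has_derivative (\<lambda>p. H *v fst p)) F" for F :: "((real^'n)\<times>real) filter"
    by (rule bounded_linear_imp_has_derivative[OF bl])
  have e: "((\<lambda>p. g \<bullet> fst p + (1/2) * (fst p \<bullet> (H *v fst p)) + ((snd p)^2 / 2) * (fst p \<bullet> fst p - r^2)) has_derivative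
     (\<lambda>p'. g \<bullet> fst p' + (1/2) * (fst p' \<bullet> (H *v d) + d \<bullet> (H *v fst p')) + ((2 * \<beta> * snd p') / 2) * (d \<bullet> d - r^2)
        + (\<beta>^2/2) * (fst p' \<bullet> d + d \<bullet> fst p'))) (at (d,\<beta>))"
    apply (rule has_derivative_eq_rhs)
     apply (auto intro!: derivative_eq_intros)[1]
    apply (simp add: fun_eq_iff add_divide_distrib)
    done
  have f1: "(\<lambda>(d, \<beta>). g \<bullet> d + (1/2) * (d \<bullet> (H *v d)) + (\<beta>^2 / 2) * ((norm d)^2 - r^2))
     = (\<lambda>p. g \<bullet> fst p + (1/2) * (fst p \<bullet> (H *v fst p)) + ((snd p)^2 / 2) * (fst p \<bullet> fst p - r^2))"
    by (simp add: fun_eq_iff power2_norm_eq_inner)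
  have f2: "(\<lambda>(h, t). (g + H *v d + (\<beta>^2) *\<^sub>R d) \<bullet> h + (\<beta> * ((norm d)^2 - r^2)) * t)
     = (\<lambda>p'. g \<bullet> fst p' + (1/2) * (fst p' \<bullet> (H *v d) + d \<bullet> (H *v fst p')) + ((2 * \<beta> * snd p') / 2) * (d \<bullet> d - r^2)
        + (\<beta>^2/2) * (fst p' \<bullet> d + d \<bullet> fst p'))"
  proof (rule ext, clarify)
    fix h t
    have a: "d \<bullet> (H *v h) = (H *v d) \<bullet> h" by (rule symdot[OF assms])
    have b: "h \<bullet> (H *v d) = (H *v d) \<bullet> h" by (rule inner_commute)
    have c: "d \<bullet> h = h \<bullet> d" by (rule inner_commute)
    show "(g + H *v d + (\<beta>^2) *\<^sub>R d) \<bullet> h + (\<beta> * ((norm d)^2 - r^2)) * t =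
      g \<bullet> fst (h,t) + (1/2) * (fst (h,t) \<bullet> (H *v d) + d \<bullet> (H *v fst (h,t))) + ((2 * \<beta> * snd (h,t)) / 2) * (d \<bullet> d - r^2)
        + (\<beta>^2/2) * (fst (h,t) \<bullet> d + d \<bullet> fst (h,t))"
      unfolding fst_conv snd_conv a b c inner_add_left inner_scaleR_left power2_norm_eq_inner
      by (simp add: algebra_simps)
  qed
  show ?thesis unfolding f1 f2 by (rule e)
qed

lemma Lag_has_derivative:
  assumes "transpose H = H"
  shows "((\<lambda>(d, \<beta>). Lag g H r d \<beta>) has_derivative
     (\<lambda>(h, t). gradL_d g H r d \<beta> \<bullet> h + gradL_beta g H r d \<beta> * t)) (at (d, \<beta>))"
  unfolding Lag_def fobj_def gradL_d_def gradL_beta_def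
  by (rule Lag_derivative_aux[OF assms])

text \<open>phi_k(lambda) = sum_i (b_i / (1 + eta (D_ii + lambda)))^2\<close>

definition phi :: "real^'n^'n \<Rightarrow> real \<Rightarrow> real^'n \<Rightarrow> real \<Rightarrow> real" where
  "phi D \<eta> b lam = (\<Sum>i\<in>UNIV. (b $ i / (1 + \<eta> * (D $ i $ i + lam)))^2)"

definition lam_next :: "real^'n^'n \<Rightarrow> real \<Rightarrow> real \<Rightarrow> real^'n \<Rightarrow> real" where
  "lam_next D \<eta> r b =
     (if phi D \<eta> b 0 \<le> r^2 then 0 else (THE lam. lam > 0 \<and> phi D \<eta> b lam = r^2))"

text \<open>One step: given d_k, return (d_{k+1}, lambda_{k+1}).\<close>

definition aie_step :: "real^'n \<Rightarrow> real^'n^'n \<Rightarrow> real^'n^'n \<Rightarrow> real \<Rightarrow> real \<Rightarrow> real^'n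
    \<Rightarrow> (real^'n) \<times> real" where
  "aie_step g D T r \<eta> d =
     (let b = d - \<eta> *\<^sub>R (g + T *v d);
          l = lam_next D \<eta> r b
      in (matrix_inv (mat 1 + \<eta> *\<^sub>R (D + l *\<^sub>R mat 1)) *v b, l))"

text \<open>aie_iter k = (d_k, lambda_k); lambda_0 is not used by the method and set to 0.\<close>

fun aie_iter :: "real^'n \<Rightarrow> real^'n^'n \<Rightarrow> real^'n^'n \<Rightarrow> real \<Rightarrow> real \<Rightarrow> nat
    \<Rightarrow> (real^'n) \<times> real" where
  "aie_iter g D T r \<eta> 0 = (- (r / norm g) *\<^sub>R g, 0)"
| "aie_iter g D T r \<eta> (Suc k) = aie_step g D T r \<eta> (fst (aie_iter g D T r \<eta> k))"

definition dk :: "real^'n \<Rightarrow> real^'n^'n \<Rightarrow> real^'n^'n \<Rightarrow> real \<Rightarrow> real \<Rightarrow> nat \<Rightarrow> real^'n" where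
  "dk g D T r \<eta> k = fst (aie_iter g D T r \<eta> k)"

definition lamk :: "real^'n \<Rightarrow> real^'n^'n \<Rightarrow> real^'n^'n \<Rightarrow> real \<Rightarrow> real \<Rightarrow> nat \<Rightarrow> real" where
  "lamk g D T r \<eta> k = snd (aie_iter g D T r \<eta> k)"

definition betak :: "real^'n \<Rightarrow> real^'n^'n \<Rightarrow> real^'n^'n \<Rightarrow> real \<Rightarrow> real \<Rightarrow> nat \<Rightarrow> real" where
  "betak g D T r \<eta> k = sqrt (lamk g D T r \<eta> k)"

end

theory Submission
  imports Defs
begin


lemma diag_entry:
  fixes D :: "real^'n^'n"
  assumes D_diag: "\<And>i j. i \<noteq> j \<Longrightarrow> D $ i $ j = 0"
  shows "(mat 1 + \<eta> *\<^sub>R (D + l *\<^sub>R mat 1)) $ i $ j = (if i = j then 1 + \<eta> * (D $ i $ i + l) else 0)"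
  using D_diag[of i j] by (auto simp: mat_def)

lemma diag_mulv:
  fixes D :: "real^'n^'n"
  assumes D_diag: "\<And>i j. i \<noteq> j \<Longrightarrow> D $ i $ j = 0"
  shows "((mat 1 + \<eta> *\<^sub>R (D + l *\<^sub>R mat 1)) *v v) $ i = (1 + \<eta> * (D $ i $ i + l)) * v $ i"
proof -
  have "((mat 1 + \<eta> *\<^sub>R (D + l *\<^sub>R mat 1)) *v v) $ i
     = (\<Sum>j\<in>UNIV. if i = j then (1 + \<eta> * (D $ i $ i + l)) * v $ j else 0)"
    unfolding matrix_vector_mult_def vec_lambda_beta
    apply (rule sum.cong, simp)
    apply (subst diag_entry[OF D_diag])
    apply (auto simp del: vector_scaleR_component vec_lambda_beta)
    done
  then show ?thesis by simp
qed

lemma diag_inv: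
  fixes D :: "real^'n^'n"
  assumes D_diag: "\<And>i j. i \<noteq> j \<Longrightarrow> D $ i $ j = 0"
    and pos: "\<And>i. 1 + \<eta> * (D $ i $ i + l) > 0"
  shows "matrix_inv (mat 1 + \<eta> *\<^sub>R (D + l *\<^sub>R mat 1)) *v b = (\<chi> i. b $ i / (1 + \<eta> * (D $ i $ i + l)))"
proof -
  let ?M = "mat 1 + \<eta> *\<^sub>R (D + l *\<^sub>R mat 1)"
  let ?v = "(\<chi> i. b $ i / (1 + \<eta> * (D $ i $ i + l))) :: real^'n"
  have Mv: "?M *v ?v = b"
    using pos by (simp add: vec_eq_iff diag_mulv[OF D_diag] less_imp_neq[symmetric])
  have "inj ((*v) ?M)"
  proof (rule injI)
    fix x y assume "?M *v x = ?M *v y"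
    then have "\<And>i. (1 + \<eta> * (D $ i $ i + l)) * x $ i = (1 + \<eta> * (D $ i $ i + l)) * y $ i"
      by (metis diag_mulv[OF D_diag])
    then show "x = y" using pos by (simp add: vec_eq_iff) (metis less_irrefl)
  qed
  then have "invertible ?M"
    using invertible_left_inverse matrix_left_invertible_injective by blast
  then have "matrix_inv ?M ** ?M = mat 1"
    unfolding invertible_def matrix_inv_def by (rule someI2_ex) auto
  then have "matrix_inv ?M *v (?M *v ?v) = ?v"
    by (simp add: matrix_vector_mul_assoc)
  then show ?thesis using Mv by simp
qed


lemma phi_term_mono:
  fixes c e x y bi :: real
  assumes "c \<ge> 1" "e > 0" "0 \<le> x" "x \<le> y"
  shows "(bi / (c + e * y))^2 \<le> (bi / (c + e * x))^2"
proof -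
  have "0 \<le> e * x" using assms by simp
  then have p: "0 < c + e * x" using assms by linarith
  have "e * x \<le> e * y" using assms by (simp add: mult_left_mono)
  then have q: "c + e * x \<le> c + e * y" by linarith
  have sq: "(c + e * x)^2 \<le> (c + e * y)^2" using p q by (intro power_mono) auto
  have bp: "0 \<le> bi^2" by simp
  have px: "0 < (c + e * x)^2" using p by simp
  have "bi^2 / (c + e * y)^2 \<le> bi^2 / (c + e * x)^2"
  proof (rule divide_left_mono[OF sq bp])
    have "0 < (c + e * y)^2" using px sq by linarith
    then show "0 < (c + e * y)^2 * (c + e * x)^2" using px by (rule mult_pos_pos)
  qed
  then show ?thesis unfolding power_divide .
qed

lemma phi_term_strict:
  fixes c e x y bi :: real
  assumes "c \<ge> 1" "e > 0" "0 \<le> x" "x < y" "bi \<noteq> 0"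
  shows "(bi / (c + e * y))^2 < (bi / (c + e * x))^2"
proof -
  have "0 \<le> e * x" using assms by simp
  then have p: "0 < c + e * x" using assms by linarith
  have "e * x < e * y" using assms by simp
  then have q: "c + e * x < c + e * y" by linarith
  have sq: "(c + e * x)^2 < (c + e * y)^2" using p q by (intro power_strict_mono) auto
  have bp: "0 < bi^2" using assms(5) by simp
  have px: "0 < (c + e * x)^2" using p by simp
  have "bi^2 / (c + e * y)^2 < bi^2 / (c + e * x)^2"
  proof (rule divide_strict_left_mono[OF sq bp])
    have "0 < (c + e * y)^2" using px sq by linarith
    then show "0 < (c + e * y)^2 * (c + e * x)^2" using px by (rule mult_pos_pos)
  qed
  then show ?thesis unfolding power_divide .
qed

lemma lam_next_props:
  fixes D :: "real^'n^'n" and b :: "real^'n"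
  assumes eta: "\<eta> > 0" and D_nonneg: "\<And>i. D $ i $ i \<ge> 0" and r: "r > 0"
  shows "lam_next D \<eta> r b \<ge> 0 \<and> (lam_next D \<eta> r b = 0 \<or> phi D \<eta> b (lam_next D \<eta> r b) = r^2)"
proof (cases "phi D \<eta> b 0 \<le> r^2")
  case True
  then show ?thesis by (simp add: lam_next_def)
next
  case False
  have c1: "1 + \<eta> * D $ i $ i \<ge> 1" for i using eta D_nonneg[of i] by simp
  have phieq: "phi D \<eta> b x = (\<Sum>i\<in>UNIV. (b $ i / ((1 + \<eta> * D $ i $ i) + \<eta> * x))^2)" for x
    unfolding phi_def by (simp add: algebra_simps)
  obtain i0 where i0: "b $ i0 \<noteq> 0"
  proof (rule ccontr)
    assume "\<not> thesis"
    then have "\<forall>i. b $ i = 0" using that by blast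
    then have "phi D \<eta> b 0 = 0" by (simp add: phi_def)
    then show False using False r by simp
  qed
  have strict: "phi D \<eta> b y < phi D \<eta> b x" if "0 \<le> x" "x < y" for x y
    unfolding phieq
    apply (rule sum_strict_mono_ex1)
      apply simp
     apply (intro ballI phi_term_mono[OF c1 eta that(1)]) using that apply simp
    apply (rule bexI[of _ i0])
     apply (rule phi_term_strict[OF c1 eta that i0])
    apply simp
    done
  define S where "S = (\<Sum>i\<in>UNIV. (b $ i)^2)"
  have S_nonneg: "S \<ge> 0" unfolding S_def by (simp add: sum_nonneg)
  define M where "M = 2 * S / (\<eta> * r^2)"
  have M_nonneg: "M \<ge> 0" unfolding M_def using S_nonneg eta by simp
  have eM: "1 + \<eta> * M = 1 + 2 * S / r^2" unfolding M_def using eta by simp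
  have term_le: "(b $ i / ((1 + \<eta> * D $ i $ i) + \<eta> * M))^2 \<le> (b $ i)^2 / (1 + \<eta> * M)" for i
  proof -
    have p: "1 \<le> 1 + \<eta> * M" using eta M_nonneg by simp
    have q: "1 + \<eta> * M \<le> (1 + \<eta> * D $ i $ i) + \<eta> * M" using c1[of i] by simp
    have "(1 + \<eta> * M) \<le> (1 + \<eta> * M)^2" using p by (simp add: power2_eq_square)
    also have "\<dots> \<le> ((1 + \<eta> * D $ i $ i) + \<eta> * M)^2" using p q by (intro power_mono) auto
    finally have le: "1 + \<eta> * M \<le> ((1 + \<eta> * D $ i $ i) + \<eta> * M)^2" .
    show ?thesis unfolding power_divide
    proof (rule divide_left_mono[OF le])
      show "0 \<le> (b $ i)^2" by simp
      have "0 < ((1 + \<eta> * D $ i $ i) + \<eta> * M)^2" using p q by simp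
      then show "0 < ((1 + \<eta> * D $ i $ i) + \<eta> * M)^2 * (1 + \<eta> * M)" using p by simp
    qed
  qed
  have "phi D \<eta> b M \<le> (\<Sum>i\<in>UNIV. (b $ i)^2 / (1 + \<eta> * M))"
    unfolding phieq by (rule sum_mono) (rule term_le)
  also have "\<dots> = S / (1 + 2 * S / r^2)" unfolding S_def eM by (simp add: sum_divide_distrib)
  also have "\<dots> < r^2"
  proof -
    have "S / (1 + 2 * S / r^2) = S * r^2 / (r^2 + 2 * S)" using r S_nonneg by (simp add: field_simps)
    also have "\<dots> < r^2"
    proof -
      have r2: "r^2 > 0" using r by simp
      have den: "r^2 + 2 * S > 0" using r2 S_nonneg by linarith
      have "S * r^2 \<le> 2 * S * r^2" using S_nonneg r2 by (simp add: mult_right_mono)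
      also have "\<dots> < r^2 * r^2 + 2 * S * r^2" using r2 by simp
      also have "\<dots> = r^2 * (r^2 + 2 * S)" by (simp add: algebra_simps)
      finally show ?thesis using den by (simp add: pos_divide_less_eq)
    qed
    finally show ?thesis .
  qed
  finally have phiM: "phi D \<eta> b M < r^2" .
  have cont: "continuous_on {0..M} (phi D \<eta> b)"
  proof -
    have "continuous_on {0..M} (\<lambda>x. (\<Sum>i\<in>UNIV. (b $ i / ((1 + \<eta> * D $ i $ i) + \<eta> * x))^2))"
    proof (intro continuous_intros ballI)
      fix i x assume "x \<in> {0..M}"
      then have "0 \<le> \<eta> * x" using eta by simp
      then show "(1 + \<eta> * D $ i $ i) + \<eta> * x \<noteq> 0" using c1[of i] by linarith
    qed
    then show ?thesis by (simp add: phieq[abs_def])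
  qed
  obtain l where l: "0 \<le> l" "l \<le> M" "phi D \<eta> b l = r^2"
    using IVT2'[of "phi D \<eta> b" M "r^2" 0, OF less_imp_le[OF phiM] _ M_nonneg cont] False by force
  have lpos: "l > 0" using l False by (cases "l = 0") auto
  have ex1: "\<exists>!lam. lam > 0 \<and> phi D \<eta> b lam = r^2"
  proof (rule ex1I[of _ l])
    show "l > 0 \<and> phi D \<eta> b l = r^2" using lpos l by simp
    fix y assume y: "y > 0 \<and> phi D \<eta> b y = r^2"
    show "y = l"
    proof (rule ccontr)
      assume "y \<noteq> l"
      then have "y < l \<or> l < y" by linarith
      then show False using strict[of y l] strict[of l y] y l by auto
    qed
  qed
  have "(THE lam. lam > 0 \<and> phi D \<eta> b lam = r^2) > 0 \<and> phi D \<eta> b (THE lam. lam > 0 \<and> phi D \<eta> b lam = r^2) = r^2"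
    by (rule theI'[OF ex1])
  then show ?thesis using False by (simp add: lam_next_def)
qed

lemma D_mulv:
  fixes D :: "real^'n^'n"
  assumes D_diag: "\<And>i j. i \<noteq> j \<Longrightarrow> D $ i $ j = 0"
  shows "(D *v v) $ i = D $ i $ i * v $ i"
proof -
  have "(D *v v) $ i = (\<Sum>j\<in>UNIV. if i = j then D $ i $ i * v $ j else 0)"
    unfolding matrix_vector_mult_def vec_lambda_beta
    by (rule sum.cong) (auto simp: D_diag)
  then show ?thesis by simp
qed

lemma step_bound:
  fixes g d :: "real^'n" and D T :: "real^'n^'n"
  assumes r_pos: "r > 0"
    and D_diag: "\<And>i j. i \<noteq> j \<Longrightarrow> D $ i $ j = 0"
    and D_nonneg: "\<And>i. D $ i $ i \<ge> 0"
    and eta: "\<eta> > 0"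
  shows "gradL_beta g (D + T) r (fst (aie_step g D T r \<eta> d)) (sqrt (snd (aie_step g D T r \<eta> d))) = 0
     \<and> gradL_d g (D + T) r (fst (aie_step g D T r \<eta> d)) (sqrt (snd (aie_step g D T r \<eta> d)))
        = T *v (fst (aie_step g D T r \<eta> d) - d) - (1/\<eta>) *\<^sub>R (fst (aie_step g D T r \<eta> d) - d)"
proof -
  define bb where "bb = d - \<eta> *\<^sub>R (g + T *v d)"
  define l where "l = lam_next D \<eta> r bb"
  have lp: "l \<ge> 0 \<and> (l = 0 \<or> phi D \<eta> bb l = r^2)"
    unfolding l_def by (rule lam_next_props[OF eta D_nonneg r_pos])
  have cpos: "1 + \<eta> * (D $ i $ i + l) > 0" for i
    using lp eta D_nonneg[of i] by (simp add: add_pos_nonneg)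
  define v :: "real^'n" where "v = (\<chi> i. bb $ i / (1 + \<eta> * (D $ i $ i + l)))"
  have step: "aie_step g D T r \<eta> d = (v, l)"
    unfolding aie_step_def Let_def bb_def[symmetric] l_def[symmetric] v_def
    using diag_inv[OF D_diag cpos] by simp
  have sq: "sqrt l ^ 2 = l" using lp by simp
  have vi: "v $ i * (1 + \<eta> * (D $ i $ i + l)) = bb $ i" for i
    unfolding v_def using cpos[of i] by simp
  have nv: "(norm v)^2 = phi D \<eta> bb l"
    unfolding power2_norm_eq_inner inner_vec_def phi_def v_def by (simp add: power2_eq_square)
  have gb: "gradL_beta g (D + T) r v (sqrt l) = 0"
    using lp nv unfolding gradL_beta_def by auto
  have gd: "gradL_d g (D + T) r v (sqrt l) = T *v (v - d) - (1/\<eta>) *\<^sub>R (v - d)"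
  proof (subst vec_eq_iff, intro allI)
    fix i
    have e1: "v $ i * (1 + \<eta> * (D $ i $ i + l)) = d $ i - \<eta> * (g $ i + (T *v d) $ i)"
      using vi[of i] unfolding bb_def by simp
    have "gradL_d g (D + T) r v (sqrt l) $ i = g $ i + D $ i $ i * v $ i + (T *v v) $ i + l * v $ i"
      unfolding gradL_d_def sq by (simp add: matrix_vector_mult_add_rdistrib D_mulv[OF D_diag])
    also have "\<dots> = (T *v v) $ i - (T *v d) $ i - (1/\<eta>) * (v $ i - d $ i)"
      using e1 eta by (simp add: field_simps)
    also have "\<dots> = (T *v (v - d) - (1/\<eta>) *\<^sub>R (v - d)) $ i"
      by (simp add: matrix_vector_mult_diff_distrib)
    finally show "gradL_d g (D + T) r v (sqrt l) $ i = (T *v (v - d) - (1/\<eta>) *\<^sub>R (v - d)) $ i" .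
  qed
  show ?thesis using gb gd step by simp
qed

theorem mainTheorem5:
  fixes g :: "real^'n" and D T :: "real^'n^'n" and r a \<eta>min \<eta> :: real
  assumes r_pos: "r > 0"
    and g_nz: "g \<noteq> 0"
    and D_diag: "\<And>i j. i \<noteq> j \<Longrightarrow> D $ i $ j = 0"
    and D_nonneg: "\<And>i. D $ i $ i \<ge> 0"
    and T_sym: "transpose T = T"
    and a_pos: "a > 0"
    and etamin_pos: "\<eta>min > 0"
    and eta_lb: "\<eta>min \<le> \<eta>"
    and eta_ub: "\<eta> \<le> 1 / (onorm (\<lambda>x. T *v x) + 2 * a)"
  shows "\<exists>b > 0. \<forall>k::nat.
     norm (gradL_d g (D + T) r (dk g D T r \<eta> (Suc k)) (betak g D T r \<eta> (Suc k)),
           gradL_beta g (D + T) r (dk g D T r \<eta> (Suc k)) (betak g D T r \<eta> (Suc k)))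
       \<le> b * norm (dk g D T r \<eta> (Suc k) - dk g D T r \<eta> k)"
proof -
  have eta: "\<eta> > 0" using etamin_pos eta_lb by linarith
  have bl: "bounded_linear (\<lambda>x. T *v x)" by simp
  have on: "onorm (\<lambda>x. T *v x) \<ge> 0" by (rule onorm_pos_le[OF bl])
  have inv: "1/\<eta> \<le> 1/\<eta>min" using etamin_pos eta_lb by (simp add: frac_le)
  define B where "B = onorm (\<lambda>x. T *v x) + 1/\<eta>min"
  have Bpos: "B > 0" proof -
    have "1/\<eta>min > 0" using etamin_pos by simp
    then show ?thesis unfolding B_def using on by linarith
  qed
  show ?thesis
  proof (intro exI[of _ B] conjI allI Bpos)
    fix k
    define d where "d = dk g D T r \<eta> k"
    have dS: "dk g D T r \<eta> (Suc k) = fst (aie_step g D T r \<eta> d)"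
      unfolding d_def dk_def by simp
    have bS: "betak g D T r \<eta> (Suc k) = sqrt (snd (aie_step g D T r \<eta> d))"
      unfolding d_def dk_def betak_def lamk_def by simp
    define v where "v = fst (aie_step g D T r \<eta> d)"
    note sb = step_bound[OF r_pos D_diag D_nonneg eta, of g T d]
    have "norm (gradL_d g (D + T) r (dk g D T r \<eta> (Suc k)) (betak g D T r \<eta> (Suc k)),
           gradL_beta g (D + T) r (dk g D T r \<eta> (Suc k)) (betak g D T r \<eta> (Suc k)))
        = norm (T *v (v - d) - (1/\<eta>) *\<^sub>R (v - d))"
      unfolding dS bS using sb v_def by simp
    also have "\<dots> \<le> norm (T *v (v - d)) + norm ((1/\<eta>) *\<^sub>R (v - d))"
      by (rule norm_triangle_ineq4)
    also have "\<dots> \<le> onorm (\<lambda>x. T *v x) * norm (v - d) + (1/\<eta>min) * norm (v - d)"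
    proof (rule add_mono)
      show "norm (T *v (v - d)) \<le> onorm (\<lambda>x. T *v x) * norm (v - d)" by (rule onorm[OF bl])
      show "norm ((1/\<eta>) *\<^sub>R (v - d)) \<le> (1/\<eta>min) * norm (v - d)"
      proof -
        have "norm ((1/\<eta>) *\<^sub>R (v - d)) = (1/\<eta>) * norm (v - d)" using eta by simp
        also have "\<dots> \<le> (1/\<eta>min) * norm (v - d)" using inv by (rule mult_right_mono) simp
        finally show ?thesis .
      qed
    qed
    also have "\<dots> = B * norm (dk g D T r \<eta> (Suc k) - dk g D T r \<eta> k)"
      unfolding B_def dS v_def d_def by (simp add: algebra_simps)
    finally show "norm (gradL_d g (D + T) r (dk g D T r \<eta> (Suc k)) (betak g D T r \<eta> (Suc k)),
           gradL_beta g (D + T) r (dk g D T r \<eta> (Suc k)) (betak g D T r \<eta> (Suc k)))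
       \<le> B * norm (dk g D T r \<eta> (Suc k) - dk g D T r \<eta> k)" .
  qed
qed

end
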